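(* Let $(X,\rho)$ be a metric space, $A,B$ nonempty subsets of $X$, and $T:A\cup B\to A\cup B$ a cyclic map for which there is $\lambda\in[0,1)$ such that $$\rho(Tx,Ty)\le\lambda\max\{\rho(x,y),\rho(x,Tx),\rho(y,Ty)\}+(1-\lambda)\,\mathrm{dist}(A,B)$$ for all $x\in A$, $y\in B$. Then for every $x\in A\cup B$ the sequence of iterates $\{T^nx\}_{n=1}^\infty$ is bounded.
   Context: $\mathrm{dist}(A,B)=\inf\{\rho(a,b):a\in A,\ b\in B\}$. A map $T:A\cup B\to A\cup B$ is cyclic if $T(A)\subseteq B$ and $T(B)\subseteq A$. *)

theory Defs
  imports "HOL-Analysis.Analysis"
begin

definition dist_sets :: "'a::metric_space set \<Rightarrow> 'a set \<Rightarrow> real" where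
  "dist_sets A B = Inf {dist a b | a b. a \<in> A \<and> b \<in> B}"

definition cyclic_map :: "'a set \<Rightarrow> 'a set \<Rightarrow> ('a \<Rightarrow> 'a) \<Rightarrow> bool" where
  "cyclic_map A B T \<longleftrightarrow> T ` A \<subseteq> B \<and> T ` B \<subseteq> A"

end

theory Submission
  imports Defs
begin

theorem lemma32:
  fixes A B :: "'a::metric_space set" and T :: "'a \<Rightarrow> 'a" and lam :: real
  assumes "A \<noteq> {}" and "B \<noteq> {}"
    and "cyclic_map A B T"
    and "0 \<le> lam" and "lam < 1"
    and "\<And>x y. x \<in> A \<Longrightarrow> y \<in> B \<Longrightarrow>
          dist (T x) (T y) \<le> lam * Max {dist x y, dist x (T x), dist y (T y)}
            + (1 - lam) * dist_sets A B"
    and "x \<in> A \<union> B"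
  shows "bounded {(T ^^ n) x | n. n \<ge> 1}"
proof -
  define D where "D = dist_sets A B"
  define s where "s n = (T ^^ n) x" for n
  have sS: "s (Suc n) = T (s n)" for n by (simp add: s_def)
  have TA: "z \<in> A \<Longrightarrow> T z \<in> B" for z using assms(3) by (auto simp: cyclic_map_def)
  have TB: "z \<in> B \<Longrightarrow> T z \<in> A" for z using assms(3) by (auto simp: cyclic_map_def)
  define opp where "opp z w \<longleftrightarrow> (z \<in> A \<and> w \<in> B) \<or> (z \<in> B \<and> w \<in> A)" for z w
  have H: "dist (T z) (T w) \<le> lam * max (dist z w) (max (dist z (T z)) (dist w (T w))) + (1 - lam) * D"
    if "opp z w" for z w
  proof (cases "z \<in> A \<and> w \<in> B")
    case True
    then show ?thesis using assms(6)[of z w] by (simp add: D_def)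
  next
    case False
    then have "w \<in> A" "z \<in> B" using that by (auto simp: opp_def)
    then have "dist (T w) (T z) \<le> lam * max (dist w z) (max (dist w (T w)) (dist z (T z))) + (1 - lam) * D"
      using assms(6)[of w z] by (simp add: D_def)
    then show ?thesis by (simp add: dist_commute max.commute max.left_commute)
  qed
  have sAB: "s n \<in> A \<union> B" for n
    by (induction n) (use assms(7) TA TB in \<open>auto simp: sS s_def\<close>)
  have oppn: "opp (s n) (s (Suc n))" for n using sAB[of n] TA TB by (auto simp: opp_def sS)
  have evA: "s k \<in> A \<Longrightarrow> s (k + 2*n) \<in> A" for k n
    by (induction n) (auto simp: sS TA TB)
  have evB: "s k \<in> B \<Longrightarrow> s (k + 2*n) \<in> B" for k n
    by (induction n) (auto simp: sS TA TB)
  define d where "d n = dist (s n) (s (Suc n))" for n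
  have step: "d (Suc n) \<le> max (d n) D" for n
  proof (rule ccontr)
    assume c: "\<not> ?thesis"
    have h: "d (Suc n) \<le> lam * max (d n) (max (d n) (d (Suc n))) + (1 - lam) * D"
      using H[OF oppn[of n]] by (simp add: d_def sS)
    have m: "max (d n) (max (d n) (d (Suc n))) = d (Suc n)" using c by auto
    have "(1 - lam) * D < (1 - lam) * d (Suc n)"
      using c assms(5) by (intro mult_strict_left_mono) auto
    then show False using h m by (simp add: algebra_simps)
  qed
  define M where "M = max (d 0) D"
  have dM: "d n \<le> M" for n
  proof (induction n)
    case 0 then show ?case by (simp add: M_def)
  next
    case (Suc n) then show ?case using step[of n] by (simp add: M_def)
  qed
  have M0: "0 \<le> M" using dM[of 0] zero_le_dist[of "s 0" "s (Suc 0)"] unfolding d_def by linarith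
  define R where "R = (2 * lam * M + (1 - lam) * D) / (1 - lam)"
  have rb: "dist (s 1) (s (2*k+2)) \<le> R" for k
  proof -
    let ?r = "dist (s 1) (s (2*k+2))"
    have op: "opp (s 0) (s (2*k+1))"
      using sAB[of 0] evA[of 0 k] evB[of 0 k] TA TB by (auto simp: opp_def sS)
    have h: "?r \<le> lam * max (dist (s 0) (s (2*k+1))) (max (d 0) (d (2*k+1))) + (1 - lam) * D"
      using H[OF op] by (simp add: d_def sS)
    have tri: "dist (s 0) (s (2*k+1)) \<le> d 0 + ?r + d (2*k+1)"
    proof -
      have "dist (s 0) (s (2*k+1)) \<le> dist (s 0) (s 1) + dist (s 1) (s (2*k+1))" by (rule dist_triangle)
      moreover have "dist (s 1) (s (2*k+1)) \<le> ?r + dist (s (2*k+2)) (s (2*k+1))" by (rule dist_triangle)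
      ultimately show ?thesis by (simp add: d_def dist_commute)
    qed
    have mx: "max (dist (s 0) (s (2*k+1))) (max (d 0) (d (2*k+1))) \<le> ?r + 2 * M"
      using tri dM[of 0] dM[of "2*k+1"] M0 zero_le_dist[of "s 1" "s (2*k+2)"] by (simp only: max_def split: if_split) linarith
    have "lam * max (dist (s 0) (s (2*k+1))) (max (d 0) (d (2*k+1))) \<le> lam * (?r + 2 * M)"
      using mx assms(4) by (rule mult_left_mono)
    with h have "?r * (1 - lam) \<le> 2 * lam * M + (1 - lam) * D" by (simp add: algebra_simps)
    then show ?thesis using assms(5) by (simp add: R_def pos_le_divide_eq)
  qed
  show ?thesis unfolding bounded_def
  proof (intro exI ballI)
    fix y assume "y \<in> {(T ^^ n) x | n. n \<ge> 1}"
    then obtain n where n: "n \<ge> 1" "y = s n" by (auto simp: s_def)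
    have "n = 1 \<or> (\<exists>k. n = 2*k+2) \<or> (\<exists>k. n = 2*k+3)" using n(1) by presburger
    then show "dist (s 1) y \<le> max R 0 + M"
    proof (elim disjE exE)
      assume "n = 1" then show ?thesis using n M0 by simp
    next
      fix k assume "n = 2*k+2" then show ?thesis using n rb[of k] M0 by simp
    next
      fix k assume k: "n = 2*k+3"
      have "dist (s 1) (s (2*k+3)) \<le> dist (s 1) (s (2*k+2)) + d (2*k+2)"
        by (simp add: d_def dist_triangle numeral_3_eq_3 add.commute)
      then show ?thesis using k n rb[of k] dM[of "2*k+2"] by simp
    qed
  qed
qed

end
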